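(* Let $W$ be the Witt algebra, the complex Lie algebra with basis $\{x_n\mid n\in\mathbb{Z}\}$ and bracket $[x_m,x_n]=(n-m)x_{m+n}$. Any left-symmetric algebra structure on the underlying vector space of $W$ whose commutator $xy-yx$ equals the bracket of $W$ is simple, i.e. has no ideals other than $0$ and itself.
   Context: A left-symmetric algebra is a vector space with bilinear product satisfying $(xy)z-x(yz)=(yx)z-y(xz)$ for all $x,y,z$. An ideal is a subspace $I$ with $AI\subseteq I$ and $IA\subseteq I$. *)

theory Defs
  imports Complex_Main "HOL-Library.Poly_Mapping"
begin

text \<open>The underlying complex vector space of the Witt algebra: finitely supported
  coefficient functions on the basis x_n, n in Z, i.e. the type int =>_0 complex;
  the basis vector x_n is Poly_Mapping.single n 1.\<close>

type_synonym witt_space = "int \<Rightarrow>\<^sub>0 complex"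

definition wscale :: "complex \<Rightarrow> witt_space \<Rightarrow> witt_space" where
  "wscale c a = Poly_Mapping.map (\<lambda>z. c * z) a"

definition witt_bracket :: "witt_space \<Rightarrow> witt_space \<Rightarrow> witt_space" where
  "witt_bracket a b =
     (\<Sum>m\<in>Poly_Mapping.keys a. \<Sum>n\<in>Poly_Mapping.keys b.
        Poly_Mapping.single (m + n) (Poly_Mapping.lookup a m * Poly_Mapping.lookup b n * of_int (n - m)))"

definition complex_bilinear :: "(witt_space \<Rightarrow> witt_space \<Rightarrow> witt_space) \<Rightarrow> bool" where
  "complex_bilinear p \<longleftrightarrow>
     (\<forall>a b c. p (a + b) c = p a c + p b c) \<and>
     (\<forall>a b c. p a (b + c) = p a b + p a c) \<and>
     (\<forall>k a b. p (wscale k a) b = wscale k (p a b)) \<and>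
     (\<forall>k a b. p a (wscale k b) = wscale k (p a b))"

definition left_symmetric :: "(witt_space \<Rightarrow> witt_space \<Rightarrow> witt_space) \<Rightarrow> bool" where
  "left_symmetric p \<longleftrightarrow>
     (\<forall>x y z. p (p x y) z - p x (p y z) = p (p y x) z - p y (p x z))"

definition is_subspace :: "witt_space set \<Rightarrow> bool" where
  "is_subspace I \<longleftrightarrow> 0 \<in> I \<and> (\<forall>a\<in>I. \<forall>b\<in>I. a + b \<in> I) \<and> (\<forall>k. \<forall>a\<in>I. wscale k a \<in> I)"

definition is_ideal :: "(witt_space \<Rightarrow> witt_space \<Rightarrow> witt_space) \<Rightarrow> witt_space set \<Rightarrow> bool" where
  "is_ideal p I \<longleftrightarrow> is_subspace I \<and> (\<forall>a. \<forall>i\<in>I. p a i \<in> I \<and> p i a \<in> I)"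

end

theory Submission
  imports Defs
begin

lemma lookup_wscale: "Poly_Mapping.lookup (wscale c a) k = c * Poly_Mapping.lookup a k"
  by (simp add: wscale_def map.rep_eq when_def)

lemma bracket_single:
  "witt_bracket (Poly_Mapping.single m 1) (Poly_Mapping.single n 1)
     = Poly_Mapping.single (m + n) (of_int (n - m))"
  by (simp add: witt_bracket_def)

lemma lookup_bracket0:
  "Poly_Mapping.lookup (witt_bracket (Poly_Mapping.single 0 1) a) j = of_int j * Poly_Mapping.lookup a j"
proof -
  have "Poly_Mapping.lookup (witt_bracket (Poly_Mapping.single 0 1) a) j
      = (\<Sum>n\<in>Poly_Mapping.keys a. (Poly_Mapping.lookup a n * of_int n when n = j))"
    by (simp add: witt_bracket_def lookup_sum lookup_single)
  also have "\<dots> = of_int j * Poly_Mapping.lookup a j"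
  proof (cases "j \<in> Poly_Mapping.keys a")
    case True
    then show ?thesis by (simp add: when_def sum.delta' mult.commute)
  next
    case False
    then have "Poly_Mapping.lookup a j = 0" by (simp add: in_keys_iff)
    then show ?thesis using False by (auto simp: when_def intro!: sum.neutral)
  qed
  finally show ?thesis .
qed

lemma lookup_bracket1:
  "Poly_Mapping.lookup (witt_bracket 1 a) j = of_int j * Poly_Mapping.lookup a j"
  using lookup_bracket0[of a j] by simp

lemma sum_monomials:
  "a = (\<Sum>k\<in>Poly_Mapping.keys a. wscale (Poly_Mapping.lookup a k) (Poly_Mapping.single k 1))"
proof (rule poly_mapping_eqI)
  fix j
  show "Poly_Mapping.lookup a j = Poly_Mapping.lookup (\<Sum>k\<in>Poly_Mapping.keys a. wscale (Poly_Mapping.lookup a k) (Poly_Mapping.single k 1)) j"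
  proof (cases "j \<in> Poly_Mapping.keys a")
    case True
    then show ?thesis by (simp add: lookup_sum lookup_wscale lookup_single when_def if_distrib sum.delta cong: if_cong)
  next
    case False
    then show ?thesis by (simp add: lookup_sum lookup_wscale lookup_single when_def if_distrib sum.delta in_keys_iff cong: if_cong)
  qed
qed

lemma sum_closed:
  assumes "is_subspace I" "finite A" "\<And>k. k \<in> A \<Longrightarrow> f k \<in> I"
  shows "sum f A \<in> I"
  using assms(2,3)
proof (induction A rule: finite_induct)
  case empty then show ?case using assms(1) by (simp add: is_subspace_def)
next
  case (insert x F) then show ?case using assms(1) by (simp add: is_subspace_def)
qed

lemma diff_eq: "a - b = a + wscale (-1) b"
  by (rule poly_mapping_eqI) (simp add: lookup_minus lookup_add lookup_wscale)

theorem proposition2p4: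
  fixes p :: "witt_space \<Rightarrow> witt_space \<Rightarrow> witt_space"
  assumes "complex_bilinear p"
    and "left_symmetric p"
    and "\<forall>x y. p x y - p y x = witt_bracket x y"
  shows "\<forall>I. is_ideal p I \<longrightarrow> I = {0} \<or> I = UNIV"
proof (intro allI impI)
  fix I assume id: "is_ideal p I"
  have sub: "is_subspace I" using id by (simp add: is_ideal_def)
  have zero: "0 \<in> I" and add: "\<And>a b. a \<in> I \<Longrightarrow> b \<in> I \<Longrightarrow> a + b \<in> I"
    and sc: "\<And>k a. a \<in> I \<Longrightarrow> wscale k a \<in> I" using sub by (auto simp: is_subspace_def)
  have dif: "\<And>a b. a \<in> I \<Longrightarrow> b \<in> I \<Longrightarrow> a - b \<in> I" using add sc diff_eq by metis
  have br: "\<And>x i. i \<in> I \<Longrightarrow> witt_bracket x i \<in> I"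
  proof -
    fix x i assume "i \<in> I"
    then have "p x i \<in> I" "p i x \<in> I" using id by (auto simp: is_ideal_def)
    then show "witt_bracket x i \<in> I" using assms(3) dif by metis
  qed
  have br2: "\<And>x i. i \<in> I \<Longrightarrow> witt_bracket i x \<in> I"
  proof -
    fix x i assume "i \<in> I"
    then have "p x i \<in> I" "p i x \<in> I" using id by (auto simp: is_ideal_def)
    then show "witt_bracket i x \<in> I" using assms(3) dif by metis
  qed
  have key: "\<And>a. a \<in> I \<Longrightarrow> a \<noteq> 0 \<Longrightarrow> \<exists>n. Poly_Mapping.single n 1 \<in> I"
  proof -
    fix a :: witt_space
    show "a \<in> I \<Longrightarrow> a \<noteq> 0 \<Longrightarrow> \<exists>n. Poly_Mapping.single n 1 \<in> I"
    proof (induction "card (Poly_Mapping.keys a)" arbitrary: a rule: less_induct)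
      case less
      have fin: "finite (Poly_Mapping.keys a)" by simp
      have ne: "Poly_Mapping.keys a \<noteq> {}" using less.prems(2) by simp
      show ?case
      proof (cases "card (Poly_Mapping.keys a) = 1")
        case True
        then obtain n where kn: "Poly_Mapping.keys a = {n}" by (meson card_1_singletonE)
        define c where "c = Poly_Mapping.lookup a n"
        have "n \<in> Poly_Mapping.keys a" using kn by simp
        then have c0: "c \<noteq> 0" by (simp add: c_def in_keys_iff)
        have "wscale (1 / c) a = Poly_Mapping.single n 1"
        proof (rule poly_mapping_eqI)
          fix j show "Poly_Mapping.lookup (wscale (1 / c) a) j = Poly_Mapping.lookup (Poly_Mapping.single n 1) j"
          proof (cases "j = n")
            case True then show ?thesis using c0 by (simp add: lookup_wscale c_def)
          next
            case False
            then have "j \<notin> Poly_Mapping.keys a" using kn by simp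
            then have "Poly_Mapping.lookup a j = 0" by (simp add: in_keys_iff)
            then show ?thesis using False by (simp add: lookup_wscale lookup_single when_def)
          qed
        qed
        then show ?thesis using sc[OF less.prems(1)] by metis
      next
        case False
        have "card (Poly_Mapping.keys a) \<ge> 2" using False ne fin
          by (metis One_nat_def Suc_1 Suc_leI card_gt_0_iff le_neq_implies_less not_less_eq_eq)
        then obtain m m' where mm: "m \<in> Poly_Mapping.keys a" "m' \<in> Poly_Mapping.keys a" "m \<noteq> m'"
          by (metis One_nat_def Suc_1 card_le_Suc0_iff_eq fin not_less_eq_eq)
        define b where "b = witt_bracket (Poly_Mapping.single 0 1) a - wscale (of_int m) a"
        have lb: "\<And>k. Poly_Mapping.lookup b k = of_int (k - m) * Poly_Mapping.lookup a k"
          by (simp add: b_def lookup_minus lookup_bracket0 lookup_bracket1 lookup_wscale algebra_simps)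
        have kb: "Poly_Mapping.keys b = Poly_Mapping.keys a - {m}"
          by (auto simp: in_keys_iff lb)
        have bI: "b \<in> I" unfolding b_def using br sc dif less.prems(1) by blast
        have bne: "b \<noteq> 0" using kb mm by (metis Diff_iff empty_iff keys_zero singletonD)
        have "card (Poly_Mapping.keys b) < card (Poly_Mapping.keys a)"
        proof -
          have "card (Poly_Mapping.keys a) > 0" using fin mm(1) card_gt_0_iff by blast
          moreover have "card (Poly_Mapping.keys b) = card (Poly_Mapping.keys a) - 1"
            using kb mm(1) fin by simp
          ultimately show ?thesis by linarith
        qed
        then show ?thesis using less.hyps bI bne by blast
      qed
    qed
  qed
  show "I = {0} \<or> I = UNIV"
  proof (cases "I = {0}")
    case True then show ?thesis by simp
  next
    case False
    then obtain a where "a \<in> I" "a \<noteq> 0" using zero by blast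
    then obtain n where n: "Poly_Mapping.single n 1 \<in> I" using key by blast
    have x0: "Poly_Mapping.single 0 1 \<in> I"
    proof (cases "n = 0")
      case True then show ?thesis using n by simp
    next
      case False
      have "witt_bracket (Poly_Mapping.single (-n) 1) (Poly_Mapping.single n 1) \<in> I" using br n by blast
      then have "Poly_Mapping.single 0 (of_int (2*n)) \<in> I" by (simp add: bracket_single)
      then have "wscale (1 / of_int (2*n)) (Poly_Mapping.single 0 (of_int (2*n))) \<in> I" using sc by blast
      moreover have "wscale (1 / of_int (2*n)) (Poly_Mapping.single 0 (of_int (2*n))) = (Poly_Mapping.single 0 1 :: witt_space)"
        using False by (intro poly_mapping_eqI) (simp add: lookup_wscale lookup_single lookup_one when_def)
      ultimately show ?thesis by simp
    qed
    have xk: "\<And>k. Poly_Mapping.single k 1 \<in> I"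
    proof -
      fix k :: int
      show "Poly_Mapping.single k 1 \<in> I"
      proof (cases "k = 0")
        case True then show ?thesis using x0 by simp
      next
        case False
        have "witt_bracket (Poly_Mapping.single k 1) (Poly_Mapping.single 0 1) \<in> I" using br x0 by blast
        then have "Poly_Mapping.single k (of_int (- k)) \<in> I" using bracket_single[of k 0] by simp
        then have "wscale (1 / of_int (-k)) (Poly_Mapping.single k (of_int (-k))) \<in> I" using sc by blast
        moreover have "wscale (1 / of_int (-k)) (Poly_Mapping.single k (of_int (-k))) = (Poly_Mapping.single k 1 :: witt_space)"
          using False by (intro poly_mapping_eqI) (simp add: lookup_wscale lookup_single lookup_one when_def)
        ultimately show ?thesis by simp
      qed
    qed
    have "\<And>a. a \<in> I"
    proof -
      fix a :: witt_space
      have "(\<Sum>k\<in>Poly_Mapping.keys a. wscale (Poly_Mapping.lookup a k) (Poly_Mapping.single k 1)) \<in> I"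
        by (rule sum_closed[OF sub]) (auto intro: sc xk)
      then show "a \<in> I" using sum_monomials[of a] by simp
    qed
    then show ?thesis by blast
  qed
qed

end
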